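(* For every integer $n\ge 3$, let $G_1$ be the graph obtained from the crown graph $H_{n,n}$ by adding one isolated vertex $v$. Then the co-bipartite graph $\overline{G_1}$ (which is $\overline{H_{n,n}}$ together with a vertex $v$ adjacent to all other vertices) is not word-representable.
   Context: A graph $G=(V,E)$ is word-representable if there exists a word $w$ over the alphabet $V$, containing every letter of $V$ at least once, such that for all distinct $x,y\in V$, the letters $x$ and $y$ alternate in $w$ (i.e., the subword of $w$ obtained by deleting all letters other than $x,y$ has no two equal consecutive letters) if and only if $xy\in E$. The crown graph $H_{n,n}$ is the bipartite graph obtained from the complete bipartite graph $K_{n,n}$ with parts $\{1,\dots,n\}$ and $\{1',\dots,n'\}$ by removing the perfect matching $\{ii' : 1\le i\le n\}$. $\overline{G}$ denotes the complement of $G$; a graph is co-bipartite if its complement is bipartite. *)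

theory Defs
  imports Main
begin

definition alternate :: "'a list \<Rightarrow> 'a \<Rightarrow> 'a \<Rightarrow> bool" where
  "alternate w x y \<longleftrightarrow>
     (let u = filter (\<lambda>z. z = x \<or> z = y) w in
      \<forall>i. Suc i < length u \<longrightarrow> u ! i \<noteq> u ! Suc i)"

(* graph given by vertex set V and (symmetric, irreflexive) adjacency E *)
definition word_represents :: "'a set \<Rightarrow> ('a \<Rightarrow> 'a \<Rightarrow> bool) \<Rightarrow> 'a list \<Rightarrow> bool" where
  "word_represents V E w \<longleftrightarrow>
     set w = V \<and>
     (\<forall>x\<in>V. \<forall>y\<in>V. x \<noteq> y \<longrightarrow> (alternate w x y \<longleftrightarrow> E x y))"

definition word_representable :: "'a set \<Rightarrow> ('a \<Rightarrow> 'a \<Rightarrow> bool) \<Rightarrow> bool" where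
  "word_representable V E \<longleftrightarrow> (\<exists>w. word_represents V E w)"

definition complement_graph :: "'a set \<Rightarrow> ('a \<Rightarrow> 'a \<Rightarrow> bool) \<Rightarrow> 'a \<Rightarrow> 'a \<Rightarrow> bool" where
  "complement_graph V E x y \<longleftrightarrow> x \<in> V \<and> y \<in> V \<and> x \<noteq> y \<and> \<not> E x y"

(* crown graph H_{n,n}: vertex (i,False) is i, vertex (i,True) is i' *)
definition crown_vertices :: "nat \<Rightarrow> (nat \<times> bool) set" where
  "crown_vertices n = {1..n} \<times> UNIV"

definition crown_adj :: "nat \<Rightarrow> nat \<times> bool \<Rightarrow> nat \<times> bool \<Rightarrow> bool" where
  "crown_adj n p q \<longleftrightarrow> p \<in> crown_vertices n \<and> q \<in> crown_vertices n \<and>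
      snd p \<noteq> snd q \<and> fst p \<noteq> fst q"

(* G_1 = H_{n,n} plus an isolated vertex v = None; other vertices are Some p *)
definition G1_vertices :: "nat \<Rightarrow> (nat \<times> bool) option set" where
  "G1_vertices n = insert None (Some ` crown_vertices n)"

definition G1_adj :: "nat \<Rightarrow> (nat \<times> bool) option \<Rightarrow> (nat \<times> bool) option \<Rightarrow> bool" where
  "G1_adj n a b \<longleftrightarrow> (case (a, b) of (Some p, Some q) \<Rightarrow> crown_adj n p q | _ \<Rightarrow> False)"

end

theory Submission
  imports Defs
begin

definition occ :: "'a \<Rightarrow> 'a list \<Rightarrow> nat" where
  "occ a xs = length (filter (\<lambda>z. z = a) xs)"

definition Dv :: "'a \<Rightarrow> 'a \<Rightarrow> 'a list \<Rightarrow> int" where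
  "Dv x y xs = int (occ x xs) - int (occ y xs)"

lemma occ_append[simp]: "occ a (xs @ ys) = occ a xs + occ a ys"
  by (simp add: occ_def)

lemma occ_Nil[simp]: "occ a [] = 0" by (simp add: occ_def)

lemma occ_single[simp]: "occ a [b] = (if b = a then 1 else 0)" by (simp add: occ_def)

lemma Dv_snoc: "Dv x y (xs @ [c]) = Dv x y xs + (if c = x then 1 else 0) - (if c = y then 1 else 0)"
  by (simp add: Dv_def)

lemma Dv_Nil[simp]: "Dv x y [] = 0" by (simp add: Dv_def)

lemma occ_filter: "P a \<Longrightarrow> occ a (filter P xs) = occ a xs"
  unfolding occ_def by (induction xs) auto

lemma Dv_filter: "P x \<Longrightarrow> P y \<Longrightarrow> Dv x y (filter P xs) = Dv x y xs"
  by (simp add: Dv_def occ_filter)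

lemma filter_take_ex: "\<exists>j. filter P (take i w) = take j (filter P w)"
proof -
  have "filter P w = filter P (take i w) @ filter P (drop i w)"
    by (metis append_take_drop_id filter_append)
  then show ?thesis by (metis append_eq_conv_conj)
qed

lemma take_filter_ex: "\<exists>i. take j (filter P w) = filter P (take i w)"
proof (induction w arbitrary: j)
  case Nil
  then show ?case by simp
next
  case (Cons a w)
  show ?case
  proof (cases "P a")
    case True
    show ?thesis
    proof (cases j)
      case 0
      then show ?thesis by (rule_tac x=0 in exI) simp
    next
      case (Suc j')
      from Cons.IH obtain i where "take j' (filter P w) = filter P (take i w)" by blast
      then show ?thesis using True Suc by (rule_tac x="Suc i" in exI) simp
    qed
  next
    case False
    from Cons.IH obtain i where "take j (filter P w) = filter P (take i w)" by blast
    then show ?thesis using False by (rule_tac x="Suc i" in exI) simp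
  qed
qed

lemma alt_list_iff:
  assumes xy: "x \<noteq> y" and su: "set u \<subseteq> {x, y}"
  shows "(\<forall>i. Suc i < length u \<longrightarrow> u ! i \<noteq> u ! Suc i) \<longleftrightarrow>
         ((\<forall>j. Dv x y (take j u) \<in> {0,1}) \<or> (\<forall>j. Dv x y (take j u) \<in> {-1,0}))"
proof
  assume alt: "\<forall>i. Suc i < length u \<longrightarrow> u ! i \<noteq> u ! Suc i"
  show "(\<forall>j. Dv x y (take j u) \<in> {0,1}) \<or> (\<forall>j. Dv x y (take j u) \<in> {-1,0})"
  proof (cases "u = []")
    case True then show ?thesis by simp
  next
    case False
    define c where "c = u ! 0"
    define c' where "c' = (if c = x then y else x)"
    have inset: "\<And>j. j < length u \<Longrightarrow> u ! j = x \<or> u ! j = y"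
      using su nth_mem by fastforce
    have cxy: "c = x \<or> c = y" using inset False c_def by auto
    have par: "\<And>j. j < length u \<Longrightarrow> u ! j = (if even j then c else c')"
    proof -
      fix j show "j < length u \<Longrightarrow> u ! j = (if even j then c else c')"
      proof (induction j)
        case 0 then show ?case by (simp add: c_def)
      next
        case (Suc j)
        then have "u ! j = (if even j then c else c')" by simp
        moreover have "u ! j \<noteq> u ! Suc j" using alt Suc.prems by blast
        moreover have "u ! Suc j = x \<or> u ! Suc j = y" using inset Suc.prems by blast
        ultimately show ?case using xy cxy by (auto simp: c'_def split: if_splits)
      qed
    qed
    define s where "s = (if c = x then (1::int) else -1)"
    have form: "\<And>j. j \<le> length u \<Longrightarrow> Dv x y (take j u) = (if even j then 0 else s)"
    proof -
      fix j show "j \<le> length u \<Longrightarrow> Dv x y (take j u) = (if even j then 0 else s)"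
      proof (induction j)
        case 0 then show ?case by simp
      next
        case (Suc j)
        then have lt: "j < length u" by simp
        have "take (Suc j) u = take j u @ [u ! j]" using lt by (simp add: take_Suc_conv_app_nth)
        then have "Dv x y (take (Suc j) u) = Dv x y (take j u) + (if u!j = x then 1 else 0) - (if u!j = y then 1 else 0)"
          by (simp add: Dv_snoc)
        moreover have "Dv x y (take j u) = (if even j then 0 else s)" using Suc by simp
        moreover have "u ! j = (if even j then c else c')" using par lt by simp
        ultimately show ?case using xy cxy by (auto simp: c'_def s_def)
      qed
    qed
    have all: "\<And>j. Dv x y (take j u) = 0 \<or> Dv x y (take j u) = s"
    proof -
      fix j
      show "Dv x y (take j u) = 0 \<or> Dv x y (take j u) = s"
      proof (cases "j \<le> length u")
        case True then show ?thesis using form by auto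
      next
        case False
        then have "take j u = take (length u) u" by simp
        then show ?thesis using form[of "length u"] by auto
      qed
    qed
    show ?thesis
    proof (cases "c = x")
      case True then show ?thesis using all s_def by auto
    next
      case False then show ?thesis using all s_def by auto
    qed
  qed
next
  assume H: "(\<forall>j. Dv x y (take j u) \<in> {0,1}) \<or> (\<forall>j. Dv x y (take j u) \<in> {-1,0})"
  show "\<forall>i. Suc i < length u \<longrightarrow> u ! i \<noteq> u ! Suc i"
  proof (intro allI impI notI)
    fix i assume lt: "Suc i < length u" and eq: "u ! i = u ! Suc i"
    have t: "take (Suc (Suc i)) u = (take i u @ [u ! i]) @ [u ! Suc i]"
      using lt by (simp add: take_Suc_conv_app_nth)
    have "i < length u" using lt by simp
    then have "u ! i \<in> set u" by (rule nth_mem)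
    then have ci: "u ! i = x \<or> u ! i = y" using su by blast
    have D0: "Dv x y (take (Suc (Suc i)) u) = Dv x y (take i u) + (if u ! i = x then 2 else -2)"
      unfolding t eq[symmetric] Dv_snoc using ci xy by (cases "u ! i = x") simp_all
    have D: "Dv x y (take (Suc (Suc i)) u) = Dv x y (take i u) + 2 \<or> Dv x y (take (Suc (Suc i)) u) = Dv x y (take i u) - 2"
      using D0 by (cases "u ! i = x") simp_all
    from H show False
    proof
      assume "\<forall>j. Dv x y (take j u) \<in> {0,1}"
      then have "Dv x y (take i u) \<in> {0,1}" "Dv x y (take (Suc (Suc i)) u) \<in> {0,1}" by blast+
      then show False using D by auto
    next
      assume "\<forall>j. Dv x y (take j u) \<in> {-1,0}"
      then have "Dv x y (take i u) \<in> {-1,0}" "Dv x y (take (Suc (Suc i)) u) \<in> {-1,0}" by blast+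
      then show False using D by auto
    qed
  qed
qed

lemma alternate_iff:
  assumes "x \<noteq> y"
  shows "alternate w x y \<longleftrightarrow> ((\<forall>i. Dv x y (take i w) \<in> {0,1}) \<or> (\<forall>i. Dv x y (take i w) \<in> {-1,0}))"
proof -
  define P where "P = (\<lambda>z. z = x \<or> z = y)"
  define u where "u = filter P w"
  have su: "set u \<subseteq> {x,y}" by (auto simp: u_def P_def)
  have Px: "P x" "P y" by (auto simp: P_def)
  have eqv: "\<And>S. (\<forall>i. Dv x y (take i w) \<in> S) \<longleftrightarrow> (\<forall>j. Dv x y (take j u) \<in> S)"
  proof
    fix S assume A: "\<forall>i. Dv x y (take i w) \<in> S"
    show "\<forall>j. Dv x y (take j u) \<in> S"
    proof
      fix j
      obtain i where "take j u = filter P (take i w)" using take_filter_ex u_def by metis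
      then show "Dv x y (take j u) \<in> S" using A Dv_filter[of P x y, OF Px] by simp
    qed
  next
    fix S assume A: "\<forall>j. Dv x y (take j u) \<in> S"
    show "\<forall>i. Dv x y (take i w) \<in> S"
    proof
      fix i
      obtain j where "filter P (take i w) = take j u" using filter_take_ex u_def by metis
      then have "Dv x y (take i w) = Dv x y (take j u)" using Dv_filter[of P x y "take i w", OF Px] by simp
      then show "Dv x y (take i w) \<in> S" using A by simp
    qed
  qed
  have "alternate w x y \<longleftrightarrow> (\<forall>i. Suc i < length u \<longrightarrow> u ! i \<noteq> u ! Suc i)"
    by (simp add: alternate_def u_def P_def Let_def)
  also have "\<dots> \<longleftrightarrow> ((\<forall>j. Dv x y (take j u) \<in> {0,1}) \<or> (\<forall>j. Dv x y (take j u) \<in> {-1,0}))"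
    by (rule alt_list_iff[OF assms su])
  finally show ?thesis using eqv[of "{0,1}"] eqv[of "{-1,0}"] by simp
qed

lemma exists_e:
  assumes "alternate w a v" "a \<noteq> v"
  shows "\<exists>e::int. \<forall>i. int (occ v (take i w)) - int (occ a (take i w)) + e \<in> {0,1}"
proof -
  from alternate_iff[OF assms(2)] assms(1)
  have "(\<forall>i. Dv a v (take i w) \<in> {0,1}) \<or> (\<forall>i. Dv a v (take i w) \<in> {-1,0})" by simp
  then show ?thesis
  proof
    assume H: "\<forall>i. Dv a v (take i w) \<in> {0,1}"
    show ?thesis
    proof (rule exI[of _ 1], intro allI)
      fix i from H have "Dv a v (take i w) \<in> {0,1}" by blast
      then show "int (occ v (take i w)) - int (occ a (take i w)) + 1 \<in> {0,1}" by (auto simp: Dv_def)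
    qed
  next
    assume H: "\<forall>i. Dv a v (take i w) \<in> {-1,0}"
    show ?thesis
    proof (rule exI[of _ 0], intro allI)
      fix i from H have "Dv a v (take i w) \<in> {-1,0}" by blast
      then show "int (occ v (take i w)) - int (occ a (take i w)) + 0 \<in> {0,1}" by (auto simp: Dv_def)
    qed
  qed
qed

lemma comp_iff:
  assumes ab: "a \<noteq> b"
    and ea: "\<forall>i. int (occ v (take i w)) - int (occ a (take i w)) + ea \<in> {0,1}"
    and eb: "\<forall>i. int (occ v (take i w)) - int (occ b (take i w)) + eb \<in> {0,1}"
  shows "alternate w a b \<longleftrightarrow>
    ((\<forall>i. int (occ a (take i w)) - ea \<le> int (occ b (take i w)) - eb) \<or>
     (\<forall>i. int (occ b (take i w)) - eb \<le> int (occ a (take i w)) - ea))"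
proof -
  have e01: "ea \<in> {0,1}" "eb \<in> {0,1}" using ea[rule_format, of 0] eb[rule_format, of 0] by simp_all
  show ?thesis
  proof
    assume "alternate w a b"
    then have "(\<forall>i. Dv a b (take i w) \<in> {0,1}) \<or> (\<forall>i. Dv a b (take i w) \<in> {-1,0})"
      using alternate_iff[OF ab] by simp
    then show "((\<forall>i. int (occ a (take i w)) - ea \<le> int (occ b (take i w)) - eb) \<or>
     (\<forall>i. int (occ b (take i w)) - eb \<le> int (occ a (take i w)) - ea))"
    proof
      assume H: "\<forall>i. Dv a b (take i w) \<in> {0,1}"
      show ?thesis
      proof (cases "ea \<le> eb")
        case True
        have "\<forall>i. int (occ b (take i w)) - eb \<le> int (occ a (take i w)) - ea"
        proof
          fix i from H have "Dv a b (take i w) \<in> {0,1}" by blast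
          then show "int (occ b (take i w)) - eb \<le> int (occ a (take i w)) - ea" using True by (auto simp: Dv_def)
        qed
        then show ?thesis by blast
      next
        case False
        have "\<forall>i. int (occ a (take i w)) - ea \<le> int (occ b (take i w)) - eb"
        proof
          fix i from H have "Dv a b (take i w) \<in> {0,1}" by blast
          then show "int (occ a (take i w)) - ea \<le> int (occ b (take i w)) - eb" using False e01 by (auto simp: Dv_def)
        qed
        then show ?thesis by blast
      qed
    next
      assume H: "\<forall>i. Dv a b (take i w) \<in> {-1,0}"
      show ?thesis
      proof (cases "eb \<le> ea")
        case True
        have "\<forall>i. int (occ a (take i w)) - ea \<le> int (occ b (take i w)) - eb"
        proof
          fix i from H have "Dv a b (take i w) \<in> {-1,0}" by blast
          then show "int (occ a (take i w)) - ea \<le> int (occ b (take i w)) - eb" using True by (auto simp: Dv_def)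
        qed
        then show ?thesis by blast
      next
        case False
        have "\<forall>i. int (occ b (take i w)) - eb \<le> int (occ a (take i w)) - ea"
        proof
          fix i from H have "Dv a b (take i w) \<in> {-1,0}" by blast
          then show "int (occ b (take i w)) - eb \<le> int (occ a (take i w)) - ea" using False e01 by (auto simp: Dv_def)
        qed
        then show ?thesis by blast
      qed
    qed
  next
    assume "((\<forall>i. int (occ a (take i w)) - ea \<le> int (occ b (take i w)) - eb) \<or>
     (\<forall>i. int (occ b (take i w)) - eb \<le> int (occ a (take i w)) - ea))"
    then have "(\<forall>i. Dv a b (take i w) \<in> {0,1}) \<or> (\<forall>i. Dv a b (take i w) \<in> {-1,0})"
    proof
      assume H: "\<forall>i. int (occ a (take i w)) - ea \<le> int (occ b (take i w)) - eb"
      have z: "ea \<ge> eb" using H[rule_format, of 0] by simp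
      show ?thesis
      proof (cases "ea = eb")
        case True
        have "\<forall>i. Dv a b (take i w) \<in> {-1,0}"
        proof
          fix i
          show "Dv a b (take i w) \<in> {-1,0}"
            using H[rule_format, of i] ea[rule_format, of i] eb[rule_format, of i] True by (auto simp: Dv_def)
        qed
        then show ?thesis by blast
      next
        case False
        have "\<forall>i. Dv a b (take i w) \<in> {0,1}"
        proof
          fix i
          show "Dv a b (take i w) \<in> {0,1}"
            using H[rule_format, of i] ea[rule_format, of i] eb[rule_format, of i] False z e01 by (auto simp: Dv_def)
        qed
        then show ?thesis by blast
      qed
    next
      assume H: "\<forall>i. int (occ b (take i w)) - eb \<le> int (occ a (take i w)) - ea"
      have z: "eb \<ge> ea" using H[rule_format, of 0] by simp
      show ?thesis
      proof (cases "ea = eb")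
        case True
        have "\<forall>i. Dv a b (take i w) \<in> {0,1}"
        proof
          fix i
          show "Dv a b (take i w) \<in> {0,1}"
            using H[rule_format, of i] ea[rule_format, of i] eb[rule_format, of i] True by (auto simp: Dv_def)
        qed
        then show ?thesis by blast
      next
        case False
        have "\<forall>i. Dv a b (take i w) \<in> {-1,0}"
        proof
          fix i
          show "Dv a b (take i w) \<in> {-1,0}"
            using H[rule_format, of i] ea[rule_format, of i] eb[rule_format, of i] False z e01 by (auto simp: Dv_def)
        qed
        then show ?thesis by blast
      qed
    qed
    then show "alternate w a b" using alternate_iff[OF ab] by simp
  qed
qed

lemma prism:
  assumes tr: "\<And>x y z. R x y \<Longrightarrow> R y z \<Longrightarrow> R x z"
  and aa: "\<And>i j. i \<in> {1,2,3::nat} \<Longrightarrow> j \<in> {1,2,3} \<Longrightarrow> i \<noteq> j \<Longrightarrow> R (a i) (a j) \<or> R (a j) (a i)"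
  and ab: "\<And>i. i \<in> {1,2,3::nat} \<Longrightarrow> R (a i) (b i) \<or> R (b i) (a i)"
  and nab: "\<And>i j. i \<in> {1,2,3::nat} \<Longrightarrow> j \<in> {1,2,3} \<Longrightarrow> i \<noteq> j \<Longrightarrow> \<not> R (a i) (b j) \<and> \<not> R (b j) (a i)"
  shows False
proof -
  have K: "R (b j) (a j) \<and> R (a i) (b i)"
    if "i \<in> {1,2,3}" "j \<in> {1,2,3}" "i \<noteq> j" "R (a i) (a j)" for i j
  proof
    have "\<not> R (a i) (b j)" using nab[of i j] that(1-3) by blast
    then have "\<not> R (a j) (b j)" using tr[of "a i" "a j" "b j"] that(4) by blast
    then show "R (b j) (a j)" using ab[of j] that(2) by blast
    have "\<not> R (b i) (a j)" using nab[of j i] that(1-3) by blast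
    then have "\<not> R (b i) (a i)" using tr[of "b i" "a i" "a j"] that(4) by blast
    then show "R (a i) (b i)" using ab[of i] that(1) by blast
  qed
  have M: False if "p \<in> {1,2,3}" "q \<in> {1,2,3}" "r \<in> {1,2,3}" "p \<noteq> q" "q \<noteq> r" "p \<noteq> r"
     "R (a p) (a q)" "R (a q) (a r)" for p q r
  proof -
    have "R (b q) (a q)" using K[of p q] that(1,2,4,7) by blast
    moreover have "R (a q) (b q)" using K[of q r] that(2,3,5,8) by blast
    ultimately have "R (b q) (a r)" using that(8) tr[of "b q" "a q" "a r"] by blast
    then show False using nab[of r q] that(2,3,5) by blast
  qed
  have c12: "R (a 1) (a 2) \<or> R (a 2) (a 1)" using aa[of 1 2] by simp
  have c13: "R (a 1) (a 3) \<or> R (a 3) (a 1)" using aa[of 1 3] by simp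
  have c23: "R (a 2) (a 3) \<or> R (a 3) (a 2)" using aa[of 2 3] by simp
  have m1: "\<not> (R (a 1) (a 2) \<and> R (a 2) (a 3))" using M[of 1 2 3] by auto
  have m2: "\<not> (R (a 1) (a 3) \<and> R (a 3) (a 2))" using M[of 1 3 2] by auto
  have m3: "\<not> (R (a 2) (a 1) \<and> R (a 1) (a 3))" using M[of 2 1 3] by auto
  have m4: "\<not> (R (a 2) (a 3) \<and> R (a 3) (a 1))" using M[of 2 3 1] by auto
  have m5: "\<not> (R (a 3) (a 1) \<and> R (a 1) (a 2))" using M[of 3 1 2] by auto
  have m6: "\<not> (R (a 3) (a 2) \<and> R (a 2) (a 1))" using M[of 3 2 1] by auto
  show False using c12 c13 c23 m1 m2 m3 m4 m5 m6 by blast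
qed

theorem mainTheorem7:
  fixes n :: nat
  assumes "n \<ge> 3"
  shows "\<not> word_representable (G1_vertices n) (complement_graph (G1_vertices n) (G1_adj n))"
proof
  assume "word_representable (G1_vertices n) (complement_graph (G1_vertices n) (G1_adj n))"
  then obtain w where wr: "word_represents (G1_vertices n) (complement_graph (G1_vertices n) (G1_adj n)) w"
    by (auto simp: word_representable_def)
  define V where "V = G1_vertices n"
  define E where "E = complement_graph (G1_vertices n) (G1_adj n)"
  have rep: "\<And>x y. x \<in> V \<Longrightarrow> y \<in> V \<Longrightarrow> x \<noteq> y \<Longrightarrow> alternate w x y \<longleftrightarrow> E x y"
    using wr by (auto simp: word_represents_def V_def E_def)
  define a where "a = (\<lambda>i::nat. Some (i, False))"
  define b where "b = (\<lambda>i::nat. Some (i, True))"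
  define X where "X = a ` {1,2,3} \<union> b ` {1,2,3}"
  have XV: "x \<in> V" "x \<noteq> None" if "x \<in> X" for x
    using that assms by (auto simp: X_def V_def G1_vertices_def crown_vertices_def a_def b_def)
  have NV: "None \<in> V" by (simp add: V_def G1_vertices_def)
  define e where "e = (\<lambda>x. SOME e::int. \<forall>i. int (occ None (take i w)) - int (occ x (take i w)) + e \<in> {0,1})"
  have eprop: "\<forall>i. int (occ None (take i w)) - int (occ x (take i w)) + e x \<in> {0,1}" if "x \<in> X" for x
  proof -
    have "E x None" using XV[OF that] NV
      by (auto simp: E_def complement_graph_def G1_adj_def V_def split: option.splits)
    then have "alternate w x None" using rep XV[OF that] NV by blast
    from exists_e[OF this XV(2)[OF that]] show ?thesis unfolding e_def by (rule someI_ex)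
  qed
  define R where "R = (\<lambda>x y. \<forall>i. int (occ x (take i w)) - e x \<le> int (occ y (take i w)) - e y)"
  have tr: "\<And>x y z. R x y \<Longrightarrow> R y z \<Longrightarrow> R x z"
    unfolding R_def using order_trans by blast
  have C: "E x y \<longleftrightarrow> R x y \<or> R y x" if "x \<in> X" "y \<in> X" "x \<noteq> y" for x y
  proof -
    have "E x y \<longleftrightarrow> alternate w x y" using rep XV that by blast
    also have "\<dots> \<longleftrightarrow> R x y \<or> R y x"
      unfolding R_def by (rule comp_iff[OF that(3) eprop[OF that(1)] eprop[OF that(2)]])
    finally show ?thesis .
  qed
  have inX: "a i \<in> X" "b i \<in> X" if "i \<in> {1,2,3}" for i
    using that by (auto simp: X_def)
  show False
  proof (rule prism[where R=R and a=a and b=b, OF tr])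
    fix i j :: nat assume ij: "i \<in> {1,2,3}" "j \<in> {1,2,3}" "i \<noteq> j"
    have "E (a i) (a j)" using ij XV[OF inX(1)[OF ij(1)]] XV[OF inX(1)[OF ij(2)]]
      by (auto simp: E_def complement_graph_def G1_adj_def crown_adj_def a_def V_def)
    then show "R (a i) (a j) \<or> R (a j) (a i)" using C inX ij by (simp add: a_def)
  next
    fix i :: nat assume i: "i \<in> {1,2,3}"
    have "E (a i) (b i)" using i XV[OF inX(1)[OF i]] XV[OF inX(2)[OF i]]
      by (auto simp: E_def complement_graph_def G1_adj_def crown_adj_def a_def b_def V_def)
    then show "R (a i) (b i) \<or> R (b i) (a i)" using C inX i by (simp add: a_def b_def)
  next
    fix i j :: nat assume ij: "i \<in> {1,2,3}" "j \<in> {1,2,3}" "i \<noteq> j"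
    have "\<not> E (a i) (b j)" using ij assms
      by (auto simp: E_def complement_graph_def G1_adj_def crown_adj_def a_def b_def crown_vertices_def)
    then show "\<not> R (a i) (b j) \<and> \<not> R (b j) (a i)" using C inX ij by (simp add: a_def b_def)
  qed
qed

end
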